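(* Let $k\ge 2$ be a fixed integer. For $n\ge 1$, let $X_n$ be the random variable counting the number of occurrences of the pattern $12\cdots k$ in a permutation $p=p_1p_2\cdots p_n$ chosen uniformly at random among all $n!$ permutations of length $n$, i.e. the number of index sets $1\le i_1<i_2<\cdots<i_k\le n$ with $p_{i_1}<p_{i_2}<\cdots<p_{i_k}$. Then there exists a constant $c>0$ (depending only on $k$) such that for all $n\ge k$, \[\operatorname{Var}(X_n)\ge c\, n^{2k-1}.\]
   Context: A permutation of length $n$ is chosen uniformly at random, each with probability $1/n!$. *)

theory Defs
  imports "HOL-Probability.Probability" "HOL-Combinatorics.Permutations"
begin

text \<open>Permutations of length n are bijections of the index set {0..<n} (0-based).
  An occurrence of the pattern 12...k is a k-element set of positions on which p is increasing.\<close>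

definition inc_occurrences :: "nat \<Rightarrow> nat \<Rightarrow> (nat \<Rightarrow> nat) \<Rightarrow> nat" where
  "inc_occurrences k n p =
     card {I. I \<subseteq> {..<n} \<and> card I = k \<and> (\<forall>i\<in>I. \<forall>j\<in>I. i < j \<longrightarrow> p i < p j)}"

definition uniform_perm :: "nat \<Rightarrow> (nat \<Rightarrow> nat) pmf" where
  "uniform_perm n = pmf_of_set {p. p permutes {..<n}}"

end

theory Submission
  imports Defs
begin

definition incr :: "nat set \<Rightarrow> (nat \<Rightarrow> nat) \<Rightarrow> bool" where
  "incr I p \<longleftrightarrow> (\<forall>i\<in>I. \<forall>j\<in>I. i < j \<longrightarrow> p i < p j)"

lemma rank_props:
  fixes g :: "nat \<Rightarrow> nat" and I :: "nat set"
  assumes fin: "finite I" and inj: "inj_on g I"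
  defines "rk \<equiv> \<lambda>i. card {j\<in>I. g j < g i}"
  shows "bij_betw rk I {..<card I}"
    and "\<And>i j. i \<in> I \<Longrightarrow> j \<in> I \<Longrightarrow> g i < g j \<Longrightarrow> rk i < rk j"
proof -
  show mono: "\<And>i j. i \<in> I \<Longrightarrow> j \<in> I \<Longrightarrow> g i < g j \<Longrightarrow> rk i < rk j"
  proof -
    fix i j assume "i \<in> I" "j \<in> I" "g i < g j"
    have "{l\<in>I. g l < g i} \<subset> {l\<in>I. g l < g j}"
      using \<open>i \<in> I\<close> \<open>g i < g j\<close> by auto
    then show "rk i < rk j" unfolding rk_def
      by (intro psubset_card_mono) (use fin in auto)
  qed
  have injr: "inj_on rk I"
  proof (rule inj_onI)
    fix i j assume ij: "i \<in> I" "j \<in> I" "rk i = rk j"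
    show "i = j"
    proof (rule ccontr)
      assume "i \<noteq> j"
      then have "g i \<noteq> g j" using inj ij by (meson inj_onD)
      then have "g i < g j \<or> g j < g i" by auto
      then show False using mono ij by fastforce
    qed
  qed
  have sub: "rk ` I \<subseteq> {..<card I}"
  proof
    fix x assume "x \<in> rk ` I"
    then obtain i where i: "i \<in> I" "x = rk i" by auto
    have "{l\<in>I. g l < g i} \<subset> I" using i by auto
    then show "x \<in> {..<card I}" unfolding i rk_def
      using fin by (simp add: psubset_card_mono)
  qed
  have "card (rk ` I) = card {..<card I}"
    using injr by (simp add: card_image)
  then have "rk ` I = {..<card I}"
    using sub by (intro card_subset_eq) auto
  then show "bij_betw rk I {..<card I}"
    using injr by (simp add: bij_betw_def)
qed

lemma sort_exists:
  fixes p :: "nat \<Rightarrow> nat"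
  assumes fin: "finite I" and inj: "inj_on p I"
  shows "\<exists>\<sigma>. \<sigma> permutes I \<and> incr I (p \<circ> \<sigma>)"
proof -
  define r where "r = (\<lambda>i. card {j\<in>I. id j < id i})"
  define s where "s = (\<lambda>i. card {j\<in>I. p j < p i})"
  have r1: "bij_betw r I {..<card I}" and r2: "\<And>i j. i \<in> I \<Longrightarrow> j \<in> I \<Longrightarrow> i < j \<Longrightarrow> r i < r j"
    using rank_props[OF fin, of id] unfolding r_def by auto
  have s1: "bij_betw s I {..<card I}" and s2: "\<And>i j. i \<in> I \<Longrightarrow> j \<in> I \<Longrightarrow> p i < p j \<Longrightarrow> s i < s j"
    using rank_props[OF fin inj] unfolding s_def by auto
  define \<sigma> where "\<sigma> = (\<lambda>i. if i \<in> I then inv_into I s (r i) else i)"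
  have sinv: "bij_betw (inv_into I s) {..<card I} I"
    using s1 by (rule bij_betw_inv_into)
  have "bij_betw (inv_into I s \<circ> r) I I"
    using r1 sinv by (rule bij_betw_trans)
  then have "bij_betw \<sigma> I I"
    by (rule bij_betw_cong[THEN iffD1, rotated]) (auto simp: \<sigma>_def)
  then have perm: "\<sigma> permutes I"
    by (rule bij_imp_permutes) (auto simp: \<sigma>_def)
  have ssig: "s (\<sigma> i) = r i" if "i \<in> I" for i
  proof -
    have "r i \<in> s ` I" using r1 s1 that by (auto simp: bij_betw_def)
    then show ?thesis using that by (simp add: \<sigma>_def f_inv_into_f)
  qed
  have sigI: "\<sigma> i \<in> I" if "i \<in> I" for i
    using perm that by (simp add: permutes_in_image)
  have "incr I (p \<circ> \<sigma>)"
    unfolding incr_def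
  proof (intro ballI impI)
    fix i j assume ij: "i \<in> I" "j \<in> I" "i < j"
    then have lt: "s (\<sigma> i) < s (\<sigma> j)" using r2 ssig by auto
    show "(p \<circ> \<sigma>) i < (p \<circ> \<sigma>) j"
    proof (rule ccontr)
      assume "\<not> ?thesis"
      then have "p (\<sigma> j) < p (\<sigma> i) \<or> p (\<sigma> j) = p (\<sigma> i)" by auto
      then show False
      proof
        assume "p (\<sigma> j) < p (\<sigma> i)"
        then have "s (\<sigma> j) < s (\<sigma> i)" using s2 sigI ij by auto
        then show False using lt by simp
      next
        assume "p (\<sigma> j) = p (\<sigma> i)"
        then have "\<sigma> j = \<sigma> i" using inj sigI ij by (meson inj_onD)
        then show False using lt by simp
      qed
    qed
  qed
  then show ?thesis using perm by blast
qed

lemma incr_inj: "incr I g \<Longrightarrow> inj_on g I"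
  unfolding incr_def
proof (rule inj_onI)
  fix x y assume h: "\<forall>i\<in>I. \<forall>j\<in>I. i < j \<longrightarrow> g i < g j" "x \<in> I" "y \<in> I" "g x = g y"
  show "x = y"
  proof (rule ccontr)
    assume "x \<noteq> y"
    then have "x < y \<or> y < x" by arith
    then show False using h by (metis less_irrefl)
  qed
qed


lemma incr_unique_vals:
  fixes g1 g2 :: "nat \<Rightarrow> nat"
  assumes fin: "finite I" and inc1: "incr I g1" and inc2: "incr I g2"
    and img: "g1 ` I = g2 ` I" and i: "i \<in> I"
  shows "g1 i = g2 i"
proof -
  define V where "V = g1 ` I"
  have cnt: "card {v\<in>V. v < g i} = card {j\<in>I. j < i}"
    if incg: "incr I g" and gI: "g ` I = V" for g
  proof -
    have injg: "inj_on g I" using incg by (rule incr_inj)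
    have "{v\<in>V. v < g i} = g ` {j\<in>I. j < i}"
    proof
      show "g ` {j\<in>I. j < i} \<subseteq> {v\<in>V. v < g i}"
      proof
        fix v assume "v \<in> g ` {j\<in>I. j < i}"
        then obtain j where "j \<in> I" "j < i" "v = g j" by auto
        moreover have "g j < g i" using incg i \<open>j \<in> I\<close> \<open>j < i\<close> unfolding incr_def by blast
        ultimately show "v \<in> {v\<in>V. v < g i}" using gI by blast
      qed
      show "{v\<in>V. v < g i} \<subseteq> g ` {j\<in>I. j < i}"
      proof
        fix v assume "v \<in> {v\<in>V. v < g i}"
        then obtain j where j: "j \<in> I" "v = g j" "g j < g i" using gI by auto
        have "j < i"
        proof (rule ccontr)
          assume "\<not> j < i"
          then have "j = i \<or> i < j" by arith
          moreover have "i < j \<Longrightarrow> g i < g j" using incg i j(1) unfolding incr_def by blast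
          ultimately show False using j(3) by auto
        qed
        then show "v \<in> g ` {j\<in>I. j < i}" using j by blast
      qed
    qed
    moreover have "inj_on g {j\<in>I. j < i}" using injg by (rule inj_on_subset) auto
    ultimately show ?thesis by (simp add: card_image)
  qed
  have c1: "card {v\<in>V. v < g1 i} = card {j\<in>I. j < i}"
    using cnt[OF inc1] V_def by simp
  have c2: "card {v\<in>V. v < g2 i} = card {j\<in>I. j < i}"
    using cnt[OF inc2] V_def img by simp
  have finV: "finite V" using fin V_def by simp
  have injV: "inj_on (\<lambda>v. card {w\<in>V. id w < id v}) V"
    using rank_props(1)[OF finV, of id] by (simp add: bij_betw_def)
  have m: "g1 i \<in> V" "g2 i \<in> V" using i V_def img by auto
  have "(\<lambda>v. card {w\<in>V. id w < id v}) (g1 i) = (\<lambda>v. card {w\<in>V. id w < id v}) (g2 i)"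
    using c1 c2 by simp
  from inj_onD[OF injV this m] show ?thesis .
qed


lemma sort_unique:
  fixes p :: "nat \<Rightarrow> nat"
  assumes fin: "finite I" and inj: "inj_on p I"
    and s1: "\<sigma>1 permutes I" "incr I (p \<circ> \<sigma>1)"
    and s2: "\<sigma>2 permutes I" "incr I (p \<circ> \<sigma>2)"
  shows "\<sigma>1 = \<sigma>2"
proof
  fix x show "\<sigma>1 x = \<sigma>2 x"
  proof (cases "x \<in> I")
    case True
    have "(p \<circ> \<sigma>1) ` I = (p \<circ> \<sigma>2) ` I"
      using s1(1) s2(1) by (simp only: image_comp[symmetric] permutes_image)
    then have "(p \<circ> \<sigma>1) x = (p \<circ> \<sigma>2) x"
      using incr_unique_vals[OF fin s1(2) s2(2) _ True] by simp
    then show ?thesis using inj True s1(1) s2(1)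
      by (simp add: inj_on_eq_iff permutes_in_image)
  next
    case False
    then show ?thesis using s1(1) s2(1) by (simp add: permutes_not_in)
  qed
qed

lemma sort_count:
  fixes p :: "nat \<Rightarrow> nat"
  assumes fin: "finite I" and inj: "inj_on p I"
  shows "(\<Sum>\<sigma>\<in>{\<sigma>. \<sigma> permutes I}. of_bool (incr I (p \<circ> \<sigma>)) :: real) = 1"
proof -
  obtain \<sigma>0 where s0: "\<sigma>0 permutes I" "incr I (p \<circ> \<sigma>0)"
    using sort_exists[OF fin inj] by blast
  have "{\<sigma>. \<sigma> permutes I} \<inter> {\<sigma>. incr I (p \<circ> \<sigma>)} = {\<sigma>0}"
    using s0 sort_unique[OF fin inj] by blast
  then show ?thesis using finite_permutations[OF fin] by simp
qed

abbreviation SP :: "nat \<Rightarrow> (nat \<Rightarrow> nat) set" where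
  "SP n \<equiv> {p. p permutes {..<n}}"

lemma finite_SP: "finite (SP n)"
  by (rule finite_permutations) simp

lemma card_SP: "card (SP n) = fact n"
  by (rule card_permutations) auto

lemma sum_SP_right: "\<rho> permutes {..<n} \<Longrightarrow> (\<Sum>p\<in>SP n. F (p \<circ> \<rho>)) = (\<Sum>p\<in>SP n. F p)"
  by (rule sum_permutations_compose_right[symmetric])

lemma sum_pos_swap:
  fixes F :: "nat \<Rightarrow> real"
  assumes "i < n" "j < n"
  shows "(\<Sum>p\<in>SP n. F (p i)) = (\<Sum>p\<in>SP n. F (p j))"
proof -
  have r: "Transposition.transpose i j permutes {..<n}" using assms by (intro permutes_swap_id) auto
  have "(\<Sum>p\<in>SP n. F (p j)) = (\<Sum>p\<in>SP n. F ((p \<circ> Transposition.transpose i j) j))"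
    using sum_SP_right[OF r, of "\<lambda>p. F (p j)"] by simp
  also have "\<dots> = (\<Sum>p\<in>SP n. F (p i))" by simp
  finally show ?thesis by simp
qed

lemma sum_row_perm:
  fixes F :: "nat \<Rightarrow> 'a::comm_monoid_add"
  assumes "p permutes {..<n}"
  shows "(\<Sum>j<n. F (p j)) = (\<Sum>x<n. F x)"
  using sum.permute[OF assms, of F] by (simp add: o_def)

lemma sum_pos_avg:
  fixes F :: "nat \<Rightarrow> real"
  assumes "i < n"
  shows "real n * (\<Sum>p\<in>SP n. F (p i)) = fact n * (\<Sum>x<n. F x)"
proof -
  have "real n * (\<Sum>p\<in>SP n. F (p i)) = (\<Sum>j<n. (\<Sum>p\<in>SP n. F (p i)))" by simp
  also have "\<dots> = (\<Sum>j<n. (\<Sum>p\<in>SP n. F (p j)))"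
    by (rule sum.cong[OF refl]) (rule sum_pos_swap[OF assms]; simp)
  also have "\<dots> = (\<Sum>p\<in>SP n. (\<Sum>j<n. F (p j)))" by (rule sum.swap)
  also have "\<dots> = (\<Sum>p\<in>SP n. (\<Sum>x<n. F x))"
    by (intro sum.cong refl sum_row_perm) auto
  also have "\<dots> = fact n * (\<Sum>x<n. F x)" by (simp add: card_SP)
  finally show ?thesis .
qed

lemma sum_pair_swap:
  fixes F :: "nat \<Rightarrow> nat \<Rightarrow> real"
  assumes "i < n" "j < n" "a < n" "b < n" "i \<noteq> j" "a \<noteq> b"
  shows "(\<Sum>p\<in>SP n. F (p i) (p j)) = (\<Sum>p\<in>SP n. F (p a) (p b))"
proof -
  define s1 where "s1 = Transposition.transpose a i"
  define \<rho> where "\<rho> = Transposition.transpose j (s1 b) \<circ> s1"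
  have s1a: "s1 a = i" by (simp add: s1_def)
  have s1b: "s1 b \<noteq> i" using assms(6) by (simp add: s1_def Transposition.transpose_def)
  have s1n: "s1 b < n" using assms by (simp add: s1_def Transposition.transpose_def)
  have r: "\<rho> permutes {..<n}" unfolding \<rho>_def s1_def
    using assms s1n[unfolded s1_def] by (intro permutes_compose permutes_swap_id) auto
  have ra: "\<rho> a = i" using s1a s1b assms(5) by (simp add: \<rho>_def Transposition.transpose_def)
  have rb: "\<rho> b = j" by (simp add: \<rho>_def)
  have "(\<Sum>p\<in>SP n. F (p a) (p b)) = (\<Sum>p\<in>SP n. F ((p \<circ> \<rho>) a) ((p \<circ> \<rho>) b))"
    using sum_SP_right[OF r, of "\<lambda>p. F (p a) (p b)"] by simp
  also have "\<dots> = (\<Sum>p\<in>SP n. F (p i) (p j))" using ra rb by simp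
  finally show ?thesis by simp
qed

lemma orbit:
  fixes H :: "(nat \<Rightarrow> nat) \<Rightarrow> real"
  assumes I: "I \<subseteq> {..<n}" and inv: "\<And>p \<sigma>. p \<in> SP n \<Longrightarrow> \<sigma> permutes I \<Longrightarrow> H (p \<circ> \<sigma>) = H p"
  shows "(\<Sum>p\<in>SP n. of_bool (incr I p) * H p) = (\<Sum>p\<in>SP n. H p) / fact (card I)"
proof -
  have fin: "finite I" using I finite_subset by blast
  let ?SI = "{\<sigma>. \<sigma> permutes I}"
  have one: "(\<Sum>\<sigma>\<in>?SI. of_bool (incr I (p \<circ> \<sigma>)) :: real) = 1" if "p \<in> SP n" for p
  proof -
    have "inj_on p I" using that permutes_inj_on by blast
    then show ?thesis by (rule sort_count[OF fin])
  qed
  have sub: "\<sigma> permutes {..<n}" if "\<sigma> \<in> ?SI" for \<sigma>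
    using that I permutes_subset by blast
  have "(\<Sum>p\<in>SP n. H p) = (\<Sum>p\<in>SP n. H p * (\<Sum>\<sigma>\<in>?SI. of_bool (incr I (p \<circ> \<sigma>))))"
    using one by (intro sum.cong) auto
  also have "\<dots> = (\<Sum>p\<in>SP n. \<Sum>\<sigma>\<in>?SI. of_bool (incr I (p \<circ> \<sigma>)) * H (p \<circ> \<sigma>))"
    by (intro sum.cong refl) (auto simp: sum_distrib_left inv mult.commute simp del: sum_mult_of_bool_eq sum_of_bool_mult_eq)
  also have "\<dots> = (\<Sum>\<sigma>\<in>?SI. \<Sum>p\<in>SP n. of_bool (incr I (p \<circ> \<sigma>)) * H (p \<circ> \<sigma>))"
    by (rule sum.swap)
  also have "\<dots> = (\<Sum>\<sigma>\<in>?SI. \<Sum>p\<in>SP n. of_bool (incr I p) * H p)"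
  proof (rule sum.cong[OF refl])
    fix \<sigma> assume "\<sigma> \<in> ?SI"
    show "(\<Sum>p\<in>SP n. of_bool (incr I (p \<circ> \<sigma>)) * H (p \<circ> \<sigma>)) = (\<Sum>p\<in>SP n. of_bool (incr I p) * H p)"
      by (rule sum_SP_right[OF sub[OF \<open>\<sigma> \<in> ?SI\<close>], of "\<lambda>p. of_bool (incr I p) * H p"])
  qed
  also have "\<dots> = fact (card I) * (\<Sum>p\<in>SP n. of_bool (incr I p) * H p)"
    using card_permutations[OF refl fin] by simp
  finally show ?thesis by (simp add: field_simps)
qed

definition uu :: "nat \<Rightarrow> nat \<Rightarrow> real" where
  "uu n x = real x - (real n - 1) / 2"

definition YY :: "nat \<Rightarrow> (nat \<Rightarrow> nat) \<Rightarrow> real" where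
  "YY n p = (\<Sum>i<n. uu n i * uu n (p i))"

lemma sum_real_lessThan: "2 * (\<Sum>x<n. real x) = real n * (real n - 1)"
  by (induction n) (auto simp: algebra_simps)

lemma sum_uu: "(\<Sum>x<n. uu n x) = 0"
proof -
  have "(\<Sum>x<n. uu n x) = (\<Sum>x<n. real x) - real n * ((real n - 1) / 2)"
    by (simp add: uu_def sum_subtractf)
  then show ?thesis using sum_real_lessThan[of n] by simp
qed

lemma sum_SP_uu: "i < n \<Longrightarrow> (\<Sum>p\<in>SP n. uu n (p i)) = 0"
  using sum_pos_avg[of i n "uu n"] by (simp add: sum_uu)

lemma sum_YY: "(\<Sum>p\<in>SP n. YY n p) = 0"
proof -
  have "(\<Sum>p\<in>SP n. YY n p) = (\<Sum>i<n. uu n i * (\<Sum>p\<in>SP n. uu n (p i)))"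
    unfolding YY_def by (simp add: sum.swap[of _ "SP n"] sum_distrib_left)
  also have "\<dots> = 0" by (simp add: sum_SP_uu)
  finally show ?thesis .
qed

lemma sum_YY2:
  assumes n: "n \<ge> 2"
  shows "(\<Sum>p\<in>SP n. (YY n p)^2) = fact n * (\<Sum>x<n. (uu n x)^2)^2 / (real n - 1)"
proof -
  define U where "U = (\<Sum>x<n. (uu n x)^2)"
  define d where "d = (\<Sum>p\<in>SP n. uu n (p 0) * uu n (p 0))"
  define c where "c = (\<Sum>p\<in>SP n. uu n (p 0) * uu n (p 1))"
  define M where "M = (\<lambda>i j. \<Sum>p\<in>SP n. uu n (p i) * uu n (p j))"
  have Mij: "M i j = c + (if i = j then d - c else 0)" if "i < n" "j < n" for i j
  proof (cases "i = j")
    case True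
    then show ?thesis unfolding M_def d_def
      using sum_pos_swap[of i n 0 "\<lambda>x. uu n x * uu n x"] that n by simp
  next
    case False
    then show ?thesis unfolding M_def c_def
      using sum_pair_swap[of i n j 0 1 "\<lambda>x y. uu n x * uu n y"] that n by simp
  qed
  have dU: "real n * d = fact n * U"
    unfolding d_def U_def using sum_pos_avg[of 0 n "\<lambda>x. uu n x * uu n x"] n
    by (simp add: power2_eq_square)
  have "(\<Sum>j<n. M 0 j) = (\<Sum>p\<in>SP n. uu n (p 0) * (\<Sum>j<n. uu n (p j)))"
    unfolding M_def by (simp add: sum.swap[of _ "SP n"] sum_distrib_left)
  also have "\<dots> = 0"
    by (rule sum.neutral) (simp add: sum_row_perm[of _ n "uu n"] sum_uu)
  finally have z: "(\<Sum>j<n. M 0 j) = 0" .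
  have "(\<Sum>j<n. M 0 j) = (\<Sum>j<n. c + (if 0 = j then d - c else 0))"
    using Mij n by (intro sum.cong) auto
  also have "\<dots> = real n * c + (d - c)"
    using n by (simp add: sum.distrib)
  finally have rel: "real n * c + (d - c) = 0" using z by simp
  have "(\<Sum>p\<in>SP n. (YY n p)^2)
      = (\<Sum>p\<in>SP n. \<Sum>i<n. \<Sum>j<n. (uu n i * uu n j) * (uu n (p i) * uu n (p j)))"
    unfolding YY_def power2_eq_square
    by (intro sum.cong refl) (simp add: sum_product algebra_simps)
  also have "\<dots> = (\<Sum>i<n. \<Sum>j<n. (uu n i * uu n j) * M i j)"
    unfolding M_def
    by (simp add: sum.swap[of _ "SP n"] sum_distrib_left)
  also have "\<dots> = (\<Sum>i<n. \<Sum>j<n. (uu n i * uu n j) * (c + (if i = j then d - c else 0)))"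
    using Mij by (intro sum.cong refl) auto
  also have "\<dots> = (\<Sum>i<n. uu n i * (c * (\<Sum>j<n. uu n j)) + (d - c) * (uu n i)^2)"
    by (intro sum.cong refl)
       (simp add: algebra_simps sum.distrib sum_distrib_left power2_eq_square if_distrib[of "\<lambda>x. _ * x"] cong: if_cong)
  also have "\<dots> = (d - c) * U"
    by (simp add: sum_uu U_def sum_distrib_left)
  finally have e: "(\<Sum>p\<in>SP n. (YY n p)^2) = (d - c) * U" .
  have "(real n - 1) * (d - c) = fact n * U" using rel dU by (simp add: algebra_simps)
  then have "d - c = fact n * U / (real n - 1)" using n by (simp add: field_simps)
  then show ?thesis using e U_def by (simp add: power2_eq_square)
qed

definition WW :: "nat \<Rightarrow> nat set \<Rightarrow> (nat \<Rightarrow> nat) \<Rightarrow> real" where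
  "WW n I p = (\<Sum>i\<in>I. uu n i * uu n (p i)) - (\<Sum>i\<in>I. uu n i) * (\<Sum>i\<in>I. uu n (p i)) / real (card I)"

lemma double_sum_identity:
  fixes a b :: "nat \<Rightarrow> real"
  assumes "finite I"
  shows "(\<Sum>i\<in>I. \<Sum>j\<in>I. (a i - a j) * (b i - b j))
       = 2 * real (card I) * (\<Sum>i\<in>I. a i * b i) - 2 * (\<Sum>i\<in>I. a i) * (\<Sum>i\<in>I. b i)"
proof -
  have pt: "(a i - a j) * (b i - b j) = ((a i * b i + a j * b j) - a i * b j) - a j * b i" for i j
    by (simp add: algebra_simps)
  have "(\<Sum>i\<in>I. \<Sum>j\<in>I. (a i - a j) * (b i - b j))
     = (\<Sum>i\<in>I. \<Sum>j\<in>I. a i * b i) + (\<Sum>i\<in>I. \<Sum>j\<in>I. a j * b j)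
       - (\<Sum>i\<in>I. \<Sum>j\<in>I. a i * b j) - (\<Sum>i\<in>I. \<Sum>j\<in>I. a j * b i)"
    unfolding pt by (simp only: sum.distrib sum_subtractf)
  also have "(\<Sum>i\<in>I. \<Sum>j\<in>I. a i * b i) = real (card I) * (\<Sum>i\<in>I. a i * b i)"
    by (simp add: sum_distrib_left mult.commute)
  also have "(\<Sum>i\<in>I. \<Sum>j\<in>I. a j * b j) = real (card I) * (\<Sum>i\<in>I. a i * b i)"
    by simp
  also have "(\<Sum>i\<in>I. \<Sum>j\<in>I. a i * b j) = (\<Sum>i\<in>I. a i) * (\<Sum>i\<in>I. b i)"
    by (simp add: sum_product)
  also have "(\<Sum>i\<in>I. \<Sum>j\<in>I. a j * b i) = (\<Sum>i\<in>I. a i) * (\<Sum>i\<in>I. b i)"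
    by (subst sum.swap) (simp add: sum_product)
  finally show ?thesis by simp
qed

lemma WW_eq:
  assumes "finite I" "I \<noteq> {}"
  shows "WW n I p = (\<Sum>i\<in>I. \<Sum>j\<in>I. (real i - real j) * (real (p i) - real (p j))) / (2 * real (card I))"
proof -
  have c: "real (card I) > 0" using assms by (simp add: card_gt_0_iff)
  have "(\<Sum>i\<in>I. \<Sum>j\<in>I. (real i - real j) * (real (p i) - real (p j)))
      = (\<Sum>i\<in>I. \<Sum>j\<in>I. (uu n i - uu n j) * (uu n (p i) - uu n (p j)))"
    by (simp add: uu_def)
  also have "\<dots> = 2 * real (card I) * WW n I p"
    unfolding double_sum_identity[OF assms(1)] WW_def using c by (simp add: field_simps)
  finally show ?thesis using c by simp
qed

lemma YW_invariant:
  assumes I: "I \<subseteq> {..<n}" and \<sigma>: "\<sigma> permutes I"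
  shows "YY n (p \<circ> \<sigma>) - WW n I (p \<circ> \<sigma>) = YY n p - WW n I p"
proof -
  have fin: "finite I" using I finite_subset by blast
  have split: "YY n q - WW n I q = (\<Sum>i\<in>{..<n} - I. uu n i * uu n (q i))
       + (\<Sum>i\<in>I. uu n i) * (\<Sum>i\<in>I. uu n (q i)) / real (card I)" for q
    unfolding YY_def WW_def using sum.subset_diff[OF I, of "\<lambda>i. uu n i * uu n (q i)"] by simp
  have a: "(\<Sum>i\<in>{..<n} - I. uu n i * uu n ((p \<circ> \<sigma>) i)) = (\<Sum>i\<in>{..<n} - I. uu n i * uu n (p i))"
    using \<sigma> by (intro sum.cong refl) (simp add: permutes_not_in)
  have b: "(\<Sum>i\<in>I. uu n ((p \<circ> \<sigma>) i)) = (\<Sum>i\<in>I. uu n (p i))"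
    using sum.permute[OF \<sigma>, of "\<lambda>i. uu n (p i)"] by (simp add: o_def)
  show ?thesis unfolding split a b ..
qed

lemma sum_WW:
  assumes I: "I \<subseteq> {..<n}"
  shows "(\<Sum>p\<in>SP n. WW n I p) = 0"
proof -
  define c where "c = (\<Sum>i\<in>I. uu n i) / real (card I)"
  have z: "(\<Sum>p\<in>SP n. uu n (p i)) = 0" if "i \<in> I" for i
    using that I by (intro sum_SP_uu) auto
  have w: "WW n I p = (\<Sum>i\<in>I. uu n i * uu n (p i)) - c * (\<Sum>i\<in>I. uu n (p i))" for p
    unfolding WW_def c_def by simp
  have A: "(\<Sum>p\<in>SP n. \<Sum>i\<in>I. uu n i * uu n (p i)) = (\<Sum>i\<in>I. uu n i * (\<Sum>p\<in>SP n. uu n (p i)))"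
    by (subst sum.swap) (simp add: sum_distrib_left)
  also have "\<dots> = 0" using z by simp
  finally have A: "(\<Sum>p\<in>SP n. \<Sum>i\<in>I. uu n i * uu n (p i)) = 0" .
  have "(\<Sum>p\<in>SP n. c * (\<Sum>i\<in>I. uu n (p i))) = c * (\<Sum>i\<in>I. (\<Sum>p\<in>SP n. uu n (p i)))"
    by (subst sum.swap) (simp add: sum_distrib_left)
  also have "\<dots> = 0" using z by simp
  finally have B: "(\<Sum>p\<in>SP n. c * (\<Sum>i\<in>I. uu n (p i))) = 0" .
  show ?thesis unfolding w sum_subtractf A B by simp
qed

definition DD :: "nat set \<Rightarrow> real" where
  "DD I = (\<Sum>i\<in>I. \<Sum>j\<in>I. \<bar>real i - real j\<bar>)"

definition EE :: "nat set \<Rightarrow> (nat \<Rightarrow> nat) \<Rightarrow> real" where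
  "EE I p = (\<Sum>i\<in>I. \<Sum>j\<in>I. \<bar>real (p i) - real (p j)\<bar>)"

lemma double_sum_le:
  fixes f :: "nat \<Rightarrow> nat \<Rightarrow> real"
  assumes "\<And>i j. i \<in> I \<Longrightarrow> j \<in> I \<Longrightarrow> f i j \<le> B"
  shows "(\<Sum>i\<in>I. \<Sum>j\<in>I. f i j) \<le> real (card I) ^ 2 * B"
proof -
  have "(\<Sum>i\<in>I. \<Sum>j\<in>I. f i j) \<le> (\<Sum>i\<in>I. real (card I) * B)"
    by (intro sum_mono sum_bounded_above) (use assms in auto)
  also have "\<dots> = real (card I) ^ 2 * B" by (simp add: power2_eq_square)
  finally show ?thesis .
qed

lemma WW_lower:
  assumes fin: "finite I" and ne: "I \<noteq> {}" and inc: "incr I p"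
  shows "WW n I p \<ge> DD I * EE I p / (2 * real (card I) ^ 5)"
proof -
  define a where "a = Min I"
  define b where "b = Max I"
  have aI: "a \<in> I" and bI: "b \<in> I" using fin ne by (auto simp: a_def b_def)
  have ai: "a \<le> i" and ib: "i \<le> b" if "i \<in> I" for i
    using that fin by (auto simp: a_def b_def)
  have pmono: "p i \<le> p j" if "i \<in> I" "j \<in> I" "i \<le> j" for i j
    using that inc unfolding incr_def by (cases "i = j") (auto simp: le_less)
  let ?T = "\<lambda>i j. (real i - real j) * (real (p i) - real (p j))"
  have Tnn: "?T i j \<ge> 0" if "i \<in> I" "j \<in> I" for i j
  proof (cases "i \<le> j")
    case True
    then have "p i \<le> p j" using pmono that by auto
    then show ?thesis using True by (intro mult_nonpos_nonpos) auto
  next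
    case False
    then have "p j \<le> p i" using pmono that by auto
    then show ?thesis using False by (intro mult_nonneg_nonneg) auto
  qed
  have "?T b a \<le> (\<Sum>j\<in>I. ?T b j)"
    using Tnn bI aI fin by (intro member_le_sum) auto
  also have "\<dots> \<le> (\<Sum>i\<in>I. \<Sum>j\<in>I. ?T i j)"
    using Tnn bI fin by (intro member_le_sum[of b] sum_nonneg) auto
  finally have T1: "?T b a \<le> (\<Sum>i\<in>I. \<Sum>j\<in>I. ?T i j)" .
  have D1: "DD I \<le> real (card I) ^ 2 * (real b - real a)"
  proof -
    have "\<bar>real i - real j\<bar> \<le> real b - real a" if "i \<in> I" "j \<in> I" for i j
    proof -
      have "real a \<le> real i" "real i \<le> real b" "real a \<le> real j" "real j \<le> real b"
        using ai[OF that(1)] ib[OF that(1)] ai[OF that(2)] ib[OF that(2)] by auto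
      then show ?thesis by (simp add: abs_le_iff)
    qed
    then show ?thesis unfolding DD_def by (intro double_sum_le) auto
  qed
  have pa: "p a \<le> p i" and pb: "p i \<le> p b" if "i \<in> I" for i
    using pmono ai ib aI bI that by auto
  have E1: "EE I p \<le> real (card I) ^ 2 * (real (p b) - real (p a))"
    unfolding EE_def by (rule double_sum_le) (use pa pb in \<open>fastforce simp: abs_le_iff\<close>)
  have c: "real (card I) > 0" using fin ne by (simp add: card_gt_0_iff)
  have Dnn: "DD I \<ge> 0" unfolding DD_def by (intro sum_nonneg) auto
  have "DD I * EE I p \<le> (real (card I) ^ 2 * (real b - real a)) * (real (card I) ^ 2 * (real (p b) - real (p a)))"
    using D1 E1 Dnn by (intro mult_mono) (auto simp: EE_def intro!: sum_nonneg)
  also have "\<dots> = real (card I) ^ 4 * ?T b a" by (simp add: power_def algebra_simps)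
  also have "\<dots> \<le> real (card I) ^ 4 * (\<Sum>i\<in>I. \<Sum>j\<in>I. ?T i j)"
    using T1 c by (intro mult_left_mono) auto
  finally have key: "DD I * EE I p \<le> real (card I) ^ 4 * (\<Sum>i\<in>I. \<Sum>j\<in>I. ?T i j)" .
  have "DD I * EE I p / (2 * real (card I) ^ 5)
      = (DD I * EE I p / real (card I) ^ 4) / (2 * real (card I))"
    using c by (simp add: field_simps power_def)
  also have "\<dots> \<le> (\<Sum>i\<in>I. \<Sum>j\<in>I. ?T i j) / (2 * real (card I))"
    using key c by (intro divide_right_mono) (auto simp: pos_divide_le_eq mult.commute)
  also have "\<dots> = WW n I p" using WW_eq[OF fin ne] by simp
  finally show ?thesis .
qed

lemma EE_invariant:
  assumes \<sigma>: "\<sigma> permutes I"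
  shows "EE I (p \<circ> \<sigma>) = EE I p"
proof -
  have "EE I (p \<circ> \<sigma>) = (\<Sum>i\<in>I. \<Sum>j\<in>I. \<bar>real (p (\<sigma> i)) - real (p j)\<bar>)"
    unfolding EE_def
  proof (rule sum.cong[OF refl])
    fix i assume "i \<in> I"
    show "(\<Sum>j\<in>I. \<bar>real ((p \<circ> \<sigma>) i) - real ((p \<circ> \<sigma>) j)\<bar>) = (\<Sum>j\<in>I. \<bar>real (p (\<sigma> i)) - real (p j)\<bar>)"
      using sum.permute[OF \<sigma>, of "\<lambda>j. \<bar>real (p (\<sigma> i)) - real (p j)\<bar>"] by (simp add: o_def)
  qed
  also have "\<dots> = EE I p"
    unfolding EE_def using sum.permute[OF \<sigma>, of "\<lambda>i. \<Sum>j\<in>I. \<bar>real (p i) - real (p j)\<bar>"]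
    by (simp add: o_def)
  finally show ?thesis .
qed

definition S2 :: "nat \<Rightarrow> real" where
  "S2 n = (\<Sum>i<n. \<Sum>j<n. \<bar>real i - real j\<bar>)"

lemma S2_formula: "3 * S2 n = real n ^ 3 - real n"
proof (induction n)
  case 0
  then show ?case by (simp add: S2_def)
next
  case (Suc n)
  have e1: "(\<Sum>i<n. \<bar>real i - real n\<bar>) = real n * real n - (\<Sum>i<n. real i)"
    by (simp add: sum_subtractf abs_if)
  have e2: "(\<Sum>j<n. \<bar>real n - real j\<bar>) = real n * real n - (\<Sum>i<n. real i)"
    by (simp add: sum_subtractf abs_if)
  have "S2 (Suc n) = S2 n + (\<Sum>i<n. \<bar>real i - real n\<bar>) + (\<Sum>j<n. \<bar>real n - real j\<bar>)"
    unfolding S2_def by (simp add: sum.distrib)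
  then have "3 * S2 (Suc n) = 3 * S2 n + 6 * (real n * real n) - 3 * (2 * (\<Sum>i<n. real i))"
    using e1 e2 by simp
  then show ?case using Suc sum_real_lessThan[of n] by (simp add: algebra_simps power3_eq_cube)
qed

definition QQ :: "nat \<Rightarrow> real" where
  "QQ n = fact n * S2 n / (real n * (real n - 1))"

lemma sum_SP_double:
  fixes F :: "nat \<Rightarrow> nat \<Rightarrow> real"
  assumes "p permutes {..<n}"
  shows "(\<Sum>i<n. \<Sum>j<n. F (p i) (p j)) = (\<Sum>x<n. \<Sum>y<n. F x y)"
proof -
  have "(\<Sum>i<n. \<Sum>j<n. F (p i) (p j)) = (\<Sum>i<n. \<Sum>y<n. F (p i) y)"
    by (intro sum.cong refl sum_row_perm[OF assms])
  also have "\<dots> = (\<Sum>x<n. \<Sum>y<n. F x y)"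
    by (rule sum_row_perm[OF assms, of "\<lambda>x. \<Sum>y<n. F x y"])
  finally show ?thesis .
qed

lemma QQ_eq:
  assumes "a < n" "b < n" "a \<noteq> b"
  shows "(\<Sum>p\<in>SP n. \<bar>real (p a) - real (p b)\<bar>) = QQ n"
proof -
  define Q where "Q = (\<Sum>p\<in>SP n. \<bar>real (p a) - real (p b)\<bar>)"
  have "(\<Sum>i<n. \<Sum>j<n. \<Sum>p\<in>SP n. \<bar>real (p i) - real (p j)\<bar>)
      = (\<Sum>p\<in>SP n. \<Sum>i<n. \<Sum>j<n. \<bar>real (p i) - real (p j)\<bar>)"
    by (simp add: sum.swap[of _ "SP n"])
  also have "\<dots> = (\<Sum>p\<in>SP n. S2 n)"
    unfolding S2_def by (intro sum.cong refl sum_SP_double[of _ n "\<lambda>x y. \<bar>real x - real y\<bar>"]) auto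
  also have "\<dots> = fact n * S2 n" by (simp add: card_SP)
  finally have L: "(\<Sum>i<n. \<Sum>j<n. \<Sum>p\<in>SP n. \<bar>real (p i) - real (p j)\<bar>) = fact n * S2 n" .
  have "(\<Sum>i<n. \<Sum>j<n. \<Sum>p\<in>SP n. \<bar>real (p i) - real (p j)\<bar>)
      = (\<Sum>i<n. \<Sum>j<n. Q - (if i = j then Q else 0))"
  proof (intro sum.cong refl)
    fix i j assume "i \<in> {..<n}" "j \<in> {..<n}"
    then show "(\<Sum>p\<in>SP n. \<bar>real (p i) - real (p j)\<bar>) = Q - (if i = j then Q else 0)"
      unfolding Q_def using sum_pair_swap[of i n j a b "\<lambda>x y. \<bar>real x - real y\<bar>"] assms
      by (cases "i = j") auto
  qed
  also have "\<dots> = real n * (real n - 1) * Q"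
    by (simp add: sum_subtractf algebra_simps)
  finally have "real n * (real n - 1) * Q = fact n * S2 n" using L by simp
  moreover have "real n * (real n - 1) > 0" using assms by auto
  ultimately have "Q = fact n * S2 n / (real n * (real n - 1))"
    by (metis nonzero_mult_div_cancel_left less_irrefl)
  then show ?thesis unfolding QQ_def Q_def .
qed

lemma count_pairs:
  assumes "i < n" "j < n" "i \<noteq> j" "2 \<le> k"
  shows "card {I. (I \<subseteq> {..<n} \<and> card I = k) \<and> i \<in> I \<and> j \<in> I} = (n - 2) choose (k - 2)"
proof -
  let ?A = "{I. (I \<subseteq> {..<n} \<and> card I = k) \<and> i \<in> I \<and> j \<in> I}"
  let ?B = "{J. J \<subseteq> {..<n} - {i, j} \<and> card J = k - 2}"
  have "bij_betw (\<lambda>I. I - {i, j}) ?A ?B"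
  proof (rule bij_betw_byWitness[where f' = "\<lambda>J. J \<union> {i, j}"])
    show "\<forall>I\<in>?A. I - {i, j} \<union> {i, j} = I" by auto
    show "\<forall>J\<in>?B. J \<union> {i, j} - {i, j} = J" by auto
    show "(\<lambda>I. I - {i, j}) ` ?A \<subseteq> ?B"
    proof
      fix J assume "J \<in> (\<lambda>I. I - {i, j}) ` ?A"
      then obtain I where I: "I \<in> ?A" "J = I - {i, j}" by blast
      have "finite I" using I(1) finite_subset by auto
      then have "card (I - {i, j}) = card I - card {i, j}"
        using I(1) by (intro card_Diff_subset) auto
      then show "J \<in> ?B" using I assms(3) by auto
    qed
    show "(\<lambda>J. J \<union> {i, j}) ` ?B \<subseteq> ?A"
    proof
      fix I assume "I \<in> (\<lambda>J. J \<union> {i, j}) ` ?B"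
      then obtain J where J: "J \<in> ?B" "I = J \<union> {i, j}" by blast
      have "finite J" using J(1) finite_subset by auto
      then have "card (J \<union> {i, j}) = card J + card {i, j}"
        using J(1) by (intro card_Un_disjoint) auto
      then show "I \<in> ?A" using J assms by auto
    qed
  qed
  then have "card ?A = card ?B" by (rule bij_betw_same_card)
  also have "\<dots> = card ({..<n} - {i, j}) choose (k - 2)" by (rule n_subsets) auto
  also have "card ({..<n} - {i, j}) = n - 2" using assms by (simp add: card_Diff_subset)
  finally show ?thesis .
qed

lemma cov_I:
  assumes I: "I \<subseteq> {..<n}" and k: "card I = k" "2 \<le> k"
  shows "(\<Sum>p\<in>SP n. of_bool (incr I p) * YY n p) \<ge> DD I * QQ n / (2 * real k ^ 5 * fact k)"
proof -
  have fin: "finite I" using I finite_subset by blast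
  have ne: "I \<noteq> {}" using k by auto
  obtain a b where ab: "a \<in> I" "b \<in> I" "a \<noteq> b"
  proof -
    obtain a where "a \<in> I" using ne by blast
    moreover have "I - {a} \<noteq> {}"
    proof
      assume "I - {a} = {}"
      then have "I \<subseteq> {a}" by blast
      then have "card I \<le> 1" using card_mono[of "{a}" I] by simp
      then show False using k by simp
    qed
    then obtain b where "b \<in> I - {a}" by blast
    ultimately show ?thesis using that by blast
  qed
  have split: "(\<Sum>p\<in>SP n. of_bool (incr I p) * YY n p)
      = (\<Sum>p\<in>SP n. of_bool (incr I p) * WW n I p) + (\<Sum>p\<in>SP n. of_bool (incr I p) * (YY n p - WW n I p))"
    by (simp add: sum.distrib[symmetric] algebra_simps del: sum_mult_of_bool_eq sum_of_bool_mult_eq)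
  have "(\<Sum>p\<in>SP n. of_bool (incr I p) * (YY n p - WW n I p)) = (\<Sum>p\<in>SP n. YY n p - WW n I p) / fact (card I)"
    by (rule orbit[OF I]) (rule YW_invariant[OF I])
  also have "\<dots> = 0" by (simp add: sum_subtractf sum_YY sum_WW[OF I])
  finally have z: "(\<Sum>p\<in>SP n. of_bool (incr I p) * (YY n p - WW n I p)) = 0" .
  have "(\<Sum>p\<in>SP n. of_bool (incr I p) * (DD I / (2 * real k ^ 5) * EE I p))
      \<le> (\<Sum>p\<in>SP n. of_bool (incr I p) * WW n I p)"
  proof (rule sum_mono)
    fix p assume "p \<in> SP n"
    show "of_bool (incr I p) * (DD I / (2 * real k ^ 5) * EE I p) \<le> of_bool (incr I p) * WW n I p"
      using WW_lower[OF fin ne, of p n] k by (cases "incr I p") auto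
  qed
  moreover have "(\<Sum>p\<in>SP n. of_bool (incr I p) * (DD I / (2 * real k ^ 5) * EE I p))
      = DD I / (2 * real k ^ 5) * (\<Sum>p\<in>SP n. of_bool (incr I p) * EE I p)"
    by (simp add: sum_distrib_left algebra_simps del: sum_mult_of_bool_eq sum_of_bool_mult_eq)
  moreover have "(\<Sum>p\<in>SP n. of_bool (incr I p) * EE I p) = (\<Sum>p\<in>SP n. EE I p) / fact k"
    using orbit[OF I, of "EE I"] EE_invariant k by auto
  moreover have "(\<Sum>p\<in>SP n. EE I p) \<ge> QQ n"
  proof -
    have "(\<Sum>p\<in>SP n. EE I p) \<ge> (\<Sum>p\<in>SP n. \<bar>real (p a) - real (p b)\<bar>)"
    proof (rule sum_mono)
      fix p assume "p \<in> SP n"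
      have "\<bar>real (p a) - real (p b)\<bar> \<le> (\<Sum>j\<in>I. \<bar>real (p a) - real (p j)\<bar>)"
        using ab fin by (intro member_le_sum) auto
      also have "\<dots> \<le> EE I p" unfolding EE_def
        using ab fin by (intro member_le_sum[of a] sum_nonneg) auto
      finally show "\<bar>real (p a) - real (p b)\<bar> \<le> EE I p" .
    qed
    moreover have "(\<Sum>p\<in>SP n. \<bar>real (p a) - real (p b)\<bar>) = QQ n"
      using ab I by (intro QQ_eq) auto
    ultimately show ?thesis by simp
  qed
  moreover have "DD I \<ge> 0" unfolding DD_def by (intro sum_nonneg) auto
  ultimately have "DD I / (2 * real k ^ 5) * (QQ n / fact k) \<le> (\<Sum>p\<in>SP n. of_bool (incr I p) * WW n I p)"
    by (smt (verit) divide_right_mono fact_ge_zero mult_left_mono of_nat_0_le_iff zero_le_power divide_nonneg_nonneg mult_nonneg_nonneg)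
  then show ?thesis using split z by (simp add: field_simps)
qed

abbreviation KS :: "nat \<Rightarrow> nat \<Rightarrow> nat set set" where
  "KS n k \<equiv> {I. I \<subseteq> {..<n} \<and> card I = k}"

lemma finite_KS: "finite (KS n k)"
  by (rule finite_subset[of _ "Pow {..<n}"]) auto

lemma X_as_sum: "real (inc_occurrences k n p) = (\<Sum>I\<in>KS n k. of_bool (incr I p))"
proof -
  have "KS n k \<inter> {I. incr I p} = {I. I \<subseteq> {..<n} \<and> card I = k \<and> (\<forall>i\<in>I. \<forall>j\<in>I. i < j \<longrightarrow> p i < p j)}"
    by (auto simp: incr_def)
  then show ?thesis unfolding inc_occurrences_def using finite_KS[of n k] by simp
qed

lemma sum_over_subset_ind:
  fixes g :: "nat \<Rightarrow> real"
  assumes "I \<subseteq> {..<n}"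
  shows "(\<Sum>i\<in>I. g i) = (\<Sum>i<n. of_bool (i \<in> I) * g i)"
proof -
  have "{..<n} \<inter> {i. i \<in> I} = I" using assms by auto
  then show ?thesis by simp
qed

lemma sumD:
  assumes k: "2 \<le> k"
  shows "(\<Sum>I\<in>KS n k. DD I) = real ((n - 2) choose (k - 2)) * S2 n"
proof -
  define f where "f = (\<lambda>i j. \<bar>real i - real j\<bar>)"
  have D: "DD I = (\<Sum>i<n. \<Sum>j<n. of_bool (i \<in> I \<and> j \<in> I) * f i j)" if "I \<in> KS n k" for I
  proof -
    have I: "I \<subseteq> {..<n}" using that by auto
    have "DD I = (\<Sum>i<n. of_bool (i \<in> I) * (\<Sum>j\<in>I. f i j))"
      unfolding DD_def f_def by (rule sum_over_subset_ind[OF I])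
    also have "\<dots> = (\<Sum>i<n. of_bool (i \<in> I) * (\<Sum>j<n. of_bool (j \<in> I) * f i j))"
      using sum_over_subset_ind[OF I] by presburger
    also have "\<dots> = (\<Sum>i<n. \<Sum>j<n. of_bool (i \<in> I \<and> j \<in> I) * f i j)"
      unfolding sum_distrib_left by (intro sum.cong refl) simp
    finally show ?thesis .
  qed
  have cnt: "(\<Sum>I\<in>KS n k. of_bool (i \<in> I \<and> j \<in> I) :: real) = real ((n - 2) choose (k - 2))"
    if "i < n" "j < n" "i \<noteq> j" for i j
  proof -
    have "KS n k \<inter> {I. i \<in> I \<and> j \<in> I} = {I. (I \<subseteq> {..<n} \<and> card I = k) \<and> i \<in> I \<and> j \<in> I}"
      by auto
    then show ?thesis using count_pairs[OF that k] finite_KS[of n k] by simp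
  qed
  have "(\<Sum>I\<in>KS n k. DD I) = (\<Sum>I\<in>KS n k. \<Sum>i<n. \<Sum>j<n. of_bool (i \<in> I \<and> j \<in> I) * f i j)"
    using D by (intro sum.cong) auto
  also have "\<dots> = (\<Sum>i<n. \<Sum>I\<in>KS n k. \<Sum>j<n. of_bool (i \<in> I \<and> j \<in> I) * f i j)"
    by (rule sum.swap)
  also have "\<dots> = (\<Sum>i<n. \<Sum>j<n. \<Sum>I\<in>KS n k. of_bool (i \<in> I \<and> j \<in> I) * f i j)"
    by (intro sum.cong refl sum.swap)
  also have "\<dots> = (\<Sum>i<n. \<Sum>j<n. (\<Sum>I\<in>KS n k. of_bool (i \<in> I \<and> j \<in> I)) * f i j)"
    by (intro sum.cong refl) (simp only: sum_distrib_right)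
  also have "\<dots> = (\<Sum>i<n. \<Sum>j<n. real ((n - 2) choose (k - 2)) * f i j)"
  proof (intro sum.cong refl)
    fix i j assume "i \<in> {..<n}" "j \<in> {..<n}"
    then show "(\<Sum>I\<in>KS n k. of_bool (i \<in> I \<and> j \<in> I)) * f i j = real ((n - 2) choose (k - 2)) * f i j"
      using cnt[of i j] by (cases "i = j") (auto simp: f_def)
  qed
  also have "\<dots> = real ((n - 2) choose (k - 2)) * S2 n"
    by (simp add: S2_def f_def sum_distrib_left)
  finally show ?thesis .
qed

lemma cov_total:
  assumes k: "2 \<le> k"
  shows "(\<Sum>p\<in>SP n. (real (inc_occurrences k n p) - m) * YY n p)
       \<ge> real ((n - 2) choose (k - 2)) * S2 n * QQ n / (2 * real k ^ 5 * fact k)"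
proof -
  have "(\<Sum>p\<in>SP n. (real (inc_occurrences k n p) - m) * YY n p)
      = (\<Sum>p\<in>SP n. real (inc_occurrences k n p) * YY n p) - m * (\<Sum>p\<in>SP n. YY n p)"
    by (simp add: algebra_simps sum_subtractf sum_distrib_left)
  also have "\<dots> = (\<Sum>p\<in>SP n. \<Sum>I\<in>KS n k. of_bool (incr I p) * YY n p)"
    by (simp add: sum_YY X_as_sum sum_distrib_right del: sum_mult_of_bool_eq sum_of_bool_mult_eq sum_of_bool_eq)
  also have "\<dots> = (\<Sum>I\<in>KS n k. \<Sum>p\<in>SP n. of_bool (incr I p) * YY n p)"
    by (rule sum.swap)
  also have "\<dots> \<ge> (\<Sum>I\<in>KS n k. DD I * QQ n / (2 * real k ^ 5 * fact k))"
    by (intro sum_mono cov_I) (use k in auto)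
  moreover have "(\<Sum>I\<in>KS n k. DD I * QQ n / (2 * real k ^ 5 * fact k))
      = real ((n - 2) choose (k - 2)) * S2 n * QQ n / (2 * real k ^ 5 * fact k)"
    using sumD[OF k, of n] by (simp add: sum_divide_distrib[symmetric] sum_distrib_right[symmetric])
  ultimately show ?thesis by simp
qed

lemma var_eq:
  fixes f :: "(nat \<Rightarrow> nat) \<Rightarrow> real"
  shows "measure_pmf.variance (uniform_perm n) f
     = (\<Sum>p\<in>SP n. (f p - (\<Sum>q\<in>SP n. f q) / fact n)^2) / fact n"
proof -
  have ne: "SP n \<noteq> {}" using permutes_id by blast
  have E: "\<And>g :: (nat \<Rightarrow> nat) \<Rightarrow> real. measure_pmf.expectation (pmf_of_set (SP n)) g = sum g (SP n) / fact n"
    using integral_pmf_of_set[OF ne finite_SP] card_SP by simp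
  show ?thesis unfolding uniform_perm_def E ..
qed

lemma S2_lower: "n \<ge> 2 \<Longrightarrow> S2 n \<ge> real n ^ 3 / 4"
proof -
  assume n: "n \<ge> 2"
  then have "real n * real n \<ge> 4" using mult_mono[of 2 "real n" 2 "real n"] by simp
  then have "real n * (real n * real n) \<ge> real n * 4" by (intro mult_left_mono) auto
  then show ?thesis using S2_formula[of n] by (simp add: power3_eq_cube)
qed

lemma U_bounds:
  assumes n: "n \<ge> 2"
  shows "0 < (\<Sum>x<n. (uu n x)^2)" "(\<Sum>x<n. (uu n x)^2) \<le> real n ^ 3 / 4"
proof -
  have "(uu n 0)^2 \<le> (\<Sum>x<n. (uu n x)^2)"
    using n by (intro member_le_sum) auto
  moreover have "uu n 0 \<noteq> 0" using n by (simp add: uu_def)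
  ultimately show "0 < (\<Sum>x<n. (uu n x)^2)" by (smt (verit) zero_less_power2)
  have "(uu n x)^2 \<le> (real n / 2)^2" if "x < n" for x
  proof -
    have "real x + 1 \<le> real n" using that by linarith
    moreover have "0 \<le> real x" by simp
    ultimately have a1: "real x - (real n - 1) / 2 \<le> real n / 2" by argo
    have a2: "- (real x - (real n - 1) / 2) \<le> real n / 2" using \<open>real x + 1 \<le> real n\<close> \<open>0 \<le> real x\<close> by argo
    from a1 a2 have "\<bar>uu n x\<bar> \<le> real n / 2" unfolding uu_def using abs_le_iff by blast
    then show ?thesis by (metis abs_ge_zero power2_abs power_mono)
  qed
  then have "(\<Sum>x<n. (uu n x)^2) \<le> (\<Sum>x<n. (real n / 2)^2)" by (intro sum_mono) auto
  also have "\<dots> = real n ^ 3 / 4" by (simp add: power2_eq_square power3_eq_cube)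
  finally show "(\<Sum>x<n. (uu n x)^2) \<le> real n ^ 3 / 4" .
qed

lemma Y2_bounds:
  assumes n: "n \<ge> 2"
  shows "0 < (\<Sum>p\<in>SP n. (YY n p)^2)" "(\<Sum>p\<in>SP n. (YY n p)^2) \<le> fact n * real n ^ 5 / 8"
proof -
  define U where "U = (\<Sum>x<n. (uu n x)^2)"
  have U: "0 < U" "U \<le> real n ^ 3 / 4" using U_bounds[OF n] U_def by auto
  have e: "(\<Sum>p\<in>SP n. (YY n p)^2) = fact n * U^2 / (real n - 1)" using sum_YY2[OF n] U_def by simp
  have n1: "real n - 1 > 0" using n by simp
  show "0 < (\<Sum>p\<in>SP n. (YY n p)^2)" unfolding e using U n1 by simp
  have "U^2 \<le> (real n ^ 3 / 4)^2" using U by (intro power_mono) auto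
  also have "\<dots> \<le> (real n - 1) * (real n ^ 5 / 8)"
  proof -
    have "real n / 2 \<le> real n - 1" using n by simp
    then have "real n / 2 * (real n ^ 5 / 8) \<le> (real n - 1) * (real n ^ 5 / 8)"
      by (intro mult_right_mono) auto
    moreover have "(real n ^ 3 / 4)^2 = real n / 2 * (real n ^ 5 / 8)"
      by (simp add: power2_eq_square power_def)
    ultimately show ?thesis by simp
  qed
  finally have "U^2 / (real n - 1) \<le> real n ^ 5 / 8" using n1 by (simp add: divide_le_eq mult.commute)
  then have "fact n * (U^2 / (real n - 1)) \<le> fact n * (real n ^ 5 / 8)"
    by (intro mult_left_mono) auto
  then show "(\<Sum>p\<in>SP n. (YY n p)^2) \<le> fact n * real n ^ 5 / 8" unfolding e by simp
qed

lemma binom_lower: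
  assumes "2 \<le> k" "k \<le> n"
  shows "(real n / (3 * real k)) ^ (k - 2) \<le> real ((n - 2) choose (k - 2))"
proof (cases "k = 2")
  case True
  then show ?thesis by simp
next
  case False
  then have k3: "k \<ge> 3" using assms by simp
  have "real n / (3 * real k) \<le> real (n - 2) / real (k - 2)"
  proof -
    have "real n * real (k - 2) \<le> 3 * real k * real (n - 2)"
    proof -
      have e: "real (k - 2) = real k - 2" "real (n - 2) = real n - 2" using assms by auto
      have "real n \<ge> 3" "real k \<ge> 3" using k3 assms by auto
      then have A: "0 \<le> real k * (real n - 3)" by simp
      have B: "3 * real k * (real n - 2) - real n * (real k - 2) = 2 * (real k * (real n - 3)) + 2 * real n"
        by (simp add: algebra_simps)
      have "real n * (real k - 2) \<le> 3 * real k * (real n - 2)" using A B by linarith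
      then show ?thesis using e by simp
    qed
    then show ?thesis using k3 assms by (simp add: divide_simps mult.commute)
  qed
  then have "(real n / (3 * real k)) ^ (k - 2) \<le> (real (n - 2) / real (k - 2)) ^ (k - 2)"
    by (intro power_mono) auto
  also have "\<dots> \<le> real ((n - 2) choose (k - 2))"
    using assms by (intro binomial_ge_n_over_k_pow_k) auto
  finally show ?thesis .
qed

theorem proposition2p6:
  fixes k :: nat
  assumes "k \<ge> 2"
  shows "\<exists>c>0. \<forall>n\<ge>k.
           measure_pmf.variance (uniform_perm n) (\<lambda>p. real (inc_occurrences k n p))
             \<ge> c * real n ^ (2 * k - 1)"
proof -
  have k: "2 \<le> k" using assms .
  define c where "c = 1 / (128 * real k ^ 10 * (fact k)^2 * (3 * real k) ^ (2*k-4))"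
  have kpos: "real k > 0" using k by simp
  have cpos: "c > 0" unfolding c_def using kpos by simp
  show ?thesis
  proof (intro exI[of _ c] conjI allI impI cpos)
    fix n assume nk: "k \<le> n"
    then have n2: "n \<ge> 2" using k by simp
    define X where "X = (\<lambda>p. real (inc_occurrences k n p))"
    define N where "N = (fact n :: real)"
    define m where "m = (\<Sum>q\<in>SP n. X q) / N"
    define Sx where "Sx = (\<Sum>p\<in>SP n. (X p - m)^2)"
    define Sy where "Sy = (\<Sum>p\<in>SP n. (YY n p)^2)"
    define Cv where "Cv = (\<Sum>p\<in>SP n. (X p - m) * YY n p)"
    define C where "C = real ((n - 2) choose (k - 2))"
    define Kf where "Kf = 2 * real k ^ 5 * fact k"
    have Npos: "N > 0" unfolding N_def by simp
    have Kfpos: "Kf > 0" unfolding Kf_def using kpos by simp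
    have nr: "real n \<ge> 2" using n2 by simp
    have var: "measure_pmf.variance (uniform_perm n) X = Sx / N"
      unfolding Sx_def m_def N_def by (rule var_eq)
    have CS: "Cv^2 \<le> Sx * Sy"
      unfolding Cv_def Sx_def Sy_def by (rule Cauchy_Schwarz_ineq_sum)
    have Sy0: "0 < Sy" and Sy1: "Sy \<le> N * real n ^ 5 / 8"
      using Y2_bounds[OF n2] unfolding Sy_def N_def by auto
    have Cv1: "Cv \<ge> C * S2 n * QQ n / Kf"
      unfolding Cv_def C_def Kf_def X_def using cov_total[OF k, of n m] by simp
    have QQe: "QQ n = N * S2 n / (real n * (real n - 1))" unfolding QQ_def N_def ..
    have S2l: "S2 n \<ge> real n ^ 3 / 4" using S2_lower[OF n2] .
    have C0: "C \<ge> 0" unfolding C_def by simp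
    have nn: "0 < real n * (real n - 1)" "real n * (real n - 1) \<le> real n * real n"
      using nr by auto
    have "C * N * real n ^ 4 / 16 = C * N * (real n ^ 3 / 4)^2 / (real n * real n)"
      using nr by (simp add: power2_eq_square power_def field_simps)
    also have "\<dots> \<le> C * N * (S2 n)^2 / (real n * real n)"
      using S2l C0 Npos nr by (intro divide_right_mono mult_left_mono power_mono) auto
    also have "\<dots> \<le> C * N * (S2 n)^2 / (real n * (real n - 1))"
      using nn C0 Npos by (intro divide_left_mono mult_nonneg_nonneg) auto
    also have "\<dots> = C * S2 n * QQ n" unfolding QQe by (simp add: power2_eq_square)
    finally have A1: "C * N * real n ^ 4 / 16 \<le> C * S2 n * QQ n" .
    define A where "A = C * N * real n ^ 4 / (16 * Kf)"
    have A0: "A \<ge> 0" unfolding A_def using C0 Npos Kfpos by simp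
    have "A \<le> C * S2 n * QQ n / Kf"
      unfolding A_def using A1 Kfpos by (simp add: divide_right_mono mult.commute flip: divide_divide_eq_left)
    then have CvA: "A \<le> Cv" using Cv1 by simp
    have "A^2 \<le> Cv^2" using A0 CvA by (intro power_mono) auto
    then have "A^2 \<le> Sx * Sy" using CS by simp
    then have "A^2 / Sy \<le> Sx" using Sy0 by (simp add: divide_le_eq)
    moreover have "A^2 / (N * real n ^ 5 / 8) \<le> A^2 / Sy"
      using Sy0 Sy1 by (intro divide_left_mono) auto
    ultimately have "A^2 / (N * real n ^ 5 / 8) / N \<le> Sx / N"
      using Npos by (intro divide_right_mono) auto
    moreover have "A^2 / (N * real n ^ 5 / 8) / N = C^2 * real n ^ 3 / (32 * Kf^2)"
      unfolding A_def using Npos nr Kfpos by (simp add: field_simps power2_eq_square power_def)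
    ultimately have V1: "C^2 * real n ^ 3 / (32 * Kf^2) \<le> Sx / N" by simp
    define B where "B = (real n / (3 * real k)) ^ (k - 2)"
    have B0: "0 \<le> B" unfolding B_def by simp
    have BC: "B \<le> C" unfolding B_def C_def by (rule binom_lower[OF k nk])
    have "B^2 * real n ^ 3 / (32 * Kf^2) \<le> C^2 * real n ^ 3 / (32 * Kf^2)"
      using B0 BC Kfpos by (intro divide_right_mono mult_right_mono power_mono) auto
    moreover have "B^2 * real n ^ 3 / (32 * Kf^2) = c * real n ^ (2 * k - 1)"
    proof -
      have e: "2*k-4 = (k-2)*2" by simp
      have "B^2 = (real n / (3 * real k)) ^ (2*k-4)"
        unfolding B_def e power_mult ..
      then have "B^2 = real n ^ (2*k-4) / (3 * real k) ^ (2*k-4)"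
        by (simp only: power_divide)
      moreover have "real n ^ (2*k-4) * real n ^ 3 = real n ^ (2*k-1)"
        using k by (simp add: power_add[symmetric])
      ultimately show ?thesis unfolding c_def Kf_def
        by (simp add: field_simps power2_eq_square)
    qed
    ultimately show "c * real n ^ (2 * k - 1) \<le> measure_pmf.variance (uniform_perm n) (\<lambda>p. real (inc_occurrences k n p))"
      using V1 var X_def by simp
  qed
qed

end
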